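(* Let $(X,\nu_X)$ and $(Y,\nu_Y)$ be centered spaces with $\operatorname{card} Y\ge 2$, and fix $x\in X$. Let $C_x(X,Y)$ be the set of functions $X\to Y$ that are centered at $x$, and define the relation $\hat x$ on $C_x(X,Y)$ by: $f\,\hat x\,g$ if and only if there is $N\in\nu_X(x)$ with $N\subseteq\{z\in X\mid f(z)=g(z)\}$. Then $\nu_X(x)$ is a filterbase on $X$ if and only if $\hat x$ is a nontrivial equivalence relation on $C_x(X,Y)$.
   Context: A centered structure on a set $X$ assigns to each point $x\in X$ a collection $\nu(x)$ of subsets of $X$ such that $x\in N$ for every $N\in\nu(x)$; a set with a centered structure is a centered space. For collections $\mathcal P,\mathcal Q$ of subsets of a set, write $\mathcal P\preceq\mathcal Q$ if for every $Q\in\mathcal Q$ there is $P\in\mathcal P$ with $P\subseteq Q$. A function $f\colon X\to Y$ between centered spaces $(X,\nu_X)$, $(Y,\nu_Y)$ is centered at $x\in X$ if $\{f(N)\mid N\in\nu_X(x)\}\preceq\nu_Y(f(x))$, i.e. for each $M\in\nu_Y(f(x))$ there is $N\in\nu_X(x)$ with $f(N)\subseteq M$. A nonempty collection $\mathcal P$ of subsets of $X$ is a filterbase on $X$ if (F0) every finite intersection $A_1\cap\cdots\cap A_n$ ($n\ge1$) of members of $\mathcal P$ is nonempty and (F2) for all $A,B\in\mathcal P$ there is $C\in\mathcal P$ with $C\subseteq A\cap B$. An equivalence relation on a set $S$ is nontrivial if it is not the total relation $S\times S$. *)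

theory Defs
  imports Main
begin

definition centered_structure :: "'a set \<Rightarrow> ('a \<Rightarrow> 'a set set) \<Rightarrow> bool" where
  "centered_structure X \<nu> \<longleftrightarrow> (\<forall>x\<in>X. \<forall>N\<in>\<nu> x. N \<subseteq> X \<and> x \<in> N)"

definition coll_le :: "'a set set \<Rightarrow> 'a set set \<Rightarrow> bool" where
  "coll_le P Q \<longleftrightarrow> (\<forall>Q'\<in>Q. \<exists>P'\<in>P. P' \<subseteq> Q')"

definition centered_at :: "('a \<Rightarrow> 'a set set) \<Rightarrow> ('b \<Rightarrow> 'b set set) \<Rightarrow> ('a \<Rightarrow> 'b) \<Rightarrow> 'a \<Rightarrow> bool" where
  "centered_at \<nu>X \<nu>Y f x \<longleftrightarrow> coll_le ((\<lambda>N. f ` N) ` \<nu>X x) (\<nu>Y (f x))"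

definition filterbase_on :: "'a set \<Rightarrow> 'a set set \<Rightarrow> bool" where
  "filterbase_on X P \<longleftrightarrow> P \<noteq> {} \<and> (\<forall>A\<in>P. A \<subseteq> X)
     \<and> (\<forall>F. finite F \<and> F \<noteq> {} \<and> F \<subseteq> P \<longrightarrow> \<Inter>F \<noteq> {})
     \<and> (\<forall>A\<in>P. \<forall>B\<in>P. \<exists>C\<in>P. C \<subseteq> A \<inter> B)"

definition centered_funs :: "'a set \<Rightarrow> ('a \<Rightarrow> 'a set set) \<Rightarrow> 'b set \<Rightarrow> ('b \<Rightarrow> 'b set set) \<Rightarrow> 'a \<Rightarrow> ('a \<Rightarrow> 'b) set" where
  "centered_funs X \<nu>X Y \<nu>Y x =
     {f. (\<forall>z\<in>X. f z \<in> Y) \<and> (\<forall>z. z \<notin> X \<longrightarrow> f z = undefined) \<and> centered_at \<nu>X \<nu>Y f x}"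

definition xhat_rel :: "'a set \<Rightarrow> ('a \<Rightarrow> 'a set set) \<Rightarrow> 'b set \<Rightarrow> ('b \<Rightarrow> 'b set set) \<Rightarrow> 'a \<Rightarrow> (('a \<Rightarrow> 'b) \<times> ('a \<Rightarrow> 'b)) set" where
  "xhat_rel X \<nu>X Y \<nu>Y x =
     {(f, g). f \<in> centered_funs X \<nu>X Y \<nu>Y x \<and> g \<in> centered_funs X \<nu>X Y \<nu>Y x
        \<and> (\<exists>N\<in>\<nu>X x. N \<subseteq> {z\<in>X. f z = g z})}"

definition nontrivial_equiv :: "'c set \<Rightarrow> ('c \<times> 'c) set \<Rightarrow> bool" where
  "nontrivial_equiv S r \<longleftrightarrow> equiv S r \<and> r \<noteq> S \<times> S"

end

theory Submission
  imports Defs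
begin

definition ind :: "'a set \<Rightarrow> 'b \<Rightarrow> 'b \<Rightarrow> 'a set \<Rightarrow> 'a \<Rightarrow> 'b" where
  "ind X y1 y2 S = (\<lambda>z. if z \<in> X then if z \<in> S then y1 else y2 else undefined)"

lemma ind_in_C:
  assumes cX: "centered_structure X \<nu>X" and cY: "centered_structure Y \<nu>Y"
    and y: "y1 \<in> Y" "y2 \<in> Y" and xX: "x \<in> X"
    and N: "N \<in> \<nu>X x" "N \<subseteq> S"
  shows "ind X y1 y2 S \<in> centered_funs X \<nu>X Y \<nu>Y x"
proof -
  have NX: "N \<subseteq> X" "x \<in> N" using cX N xX unfolding centered_structure_def by auto
  have fx: "ind X y1 y2 S x = y1" using NX N xX by (auto simp: ind_def)
  have img: "ind X y1 y2 S ` N = {y1}" using NX N by (auto simp: ind_def)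
  have "centered_at \<nu>X \<nu>Y (ind X y1 y2 S) x"
    unfolding centered_at_def coll_le_def fx
  proof
    fix M assume "M \<in> \<nu>Y y1"
    then have "y1 \<in> M" using cY y unfolding centered_structure_def by auto
    then show "\<exists>P'\<in>(\<lambda>N. ind X y1 y2 S ` N) ` \<nu>X x. P' \<subseteq> M"
      using N(1) img by blast
  qed
  then show ?thesis using y unfolding centered_funs_def by (auto simp: ind_def)
qed

lemma ind_agree:
  assumes "y1 \<noteq> y2"
  shows "{z\<in>X. ind X y1 y2 S z = ind X y1 y2 T z} = {z\<in>X. z \<in> S \<longleftrightarrow> z \<in> T}"
  using assms by (auto simp: ind_def)

theorem mainTheorem3:
  fixes X :: "'a set" and Y :: "'b set"
    and \<nu>X :: "'a \<Rightarrow> 'a set set" and \<nu>Y :: "'b \<Rightarrow> 'b set set" and x :: 'a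
  assumes "centered_structure X \<nu>X" and "centered_structure Y \<nu>Y"
    and "\<exists>y1\<in>Y. \<exists>y2\<in>Y. y1 \<noteq> y2"
    and "x \<in> X"
  shows "filterbase_on X (\<nu>X x) \<longleftrightarrow>
         nontrivial_equiv (centered_funs X \<nu>X Y \<nu>Y x) (xhat_rel X \<nu>X Y \<nu>Y x)"
proof -
  note cX = assms(1) and cY = assms(2) and xX = assms(4)
  obtain y1 y2 where y: "y1 \<in> Y" "y2 \<in> Y" "y1 \<noteq> y2" using assms(3) by blast
  define C where "C = centered_funs X \<nu>X Y \<nu>Y x"
  define R where "R = xhat_rel X \<nu>X Y \<nu>Y x"
  have sub: "\<And>N. N \<in> \<nu>X x \<Longrightarrow> N \<subseteq> X \<and> x \<in> N" using cX xX unfolding centered_structure_def by auto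
  have Rdef: "\<And>f g. (f, g) \<in> R \<longleftrightarrow> f \<in> C \<and> g \<in> C \<and> (\<exists>N\<in>\<nu>X x. N \<subseteq> {z\<in>X. f z = g z})"
    unfolding R_def C_def xhat_rel_def by simp
  have agreeI: "\<And>S T N. ind X y1 y2 S \<in> C \<Longrightarrow> ind X y1 y2 T \<in> C \<Longrightarrow> N \<in> \<nu>X x
      \<Longrightarrow> (\<And>z. z \<in> N \<Longrightarrow> (z \<in> S \<longleftrightarrow> z \<in> T)) \<Longrightarrow> (ind X y1 y2 S, ind X y1 y2 T) \<in> R"
  proof -
    fix S T N assume a: "ind X y1 y2 S \<in> C" "ind X y1 y2 T \<in> C" "N \<in> \<nu>X x"
      "\<And>z. z \<in> N \<Longrightarrow> (z \<in> S \<longleftrightarrow> z \<in> T)"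
    have "N \<subseteq> {z\<in>X. z \<in> S \<longleftrightarrow> z \<in> T}" using a(3,4) sub[OF a(3)] by auto
    then show "(ind X y1 y2 S, ind X y1 y2 T) \<in> R"
      unfolding Rdef ind_agree[OF y(3)] using a(1-3) by blast
  qed
  have agreeD: "\<And>S T. (ind X y1 y2 S, ind X y1 y2 T) \<in> R \<Longrightarrow>
      \<exists>N\<in>\<nu>X x. \<forall>z\<in>N. (z \<in> S \<longleftrightarrow> z \<in> T)"
  proof -
    fix S T assume "(ind X y1 y2 S, ind X y1 y2 T) \<in> R"
    then obtain N where N: "N \<in> \<nu>X x" "N \<subseteq> {z\<in>X. z \<in> S \<longleftrightarrow> z \<in> T}"
      unfolding Rdef ind_agree[OF y(3)] by blast
    have "\<forall>z\<in>N. (z \<in> S \<longleftrightarrow> z \<in> T)"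
    proof
      fix z assume z: "z \<in> N"
      have "z \<in> {z\<in>X. z \<in> S \<longleftrightarrow> z \<in> T}" by (rule subsetD[OF N(2) z])
      then show "z \<in> S \<longleftrightarrow> z \<in> T" by simp
    qed
    then show "\<exists>N\<in>\<nu>X x. \<forall>z\<in>N. (z \<in> S \<longleftrightarrow> z \<in> T)" using N(1) by blast
  qed
  have main: "filterbase_on X (\<nu>X x) \<longleftrightarrow> nontrivial_equiv C R"
  proof
    assume fb: "filterbase_on X (\<nu>X x)"
    have fbc: "\<nu>X x \<noteq> {} \<and> (\<forall>A\<in>\<nu>X x. A \<subseteq> X)
     \<and> (\<forall>F. finite F \<and> F \<noteq> {} \<and> F \<subseteq> \<nu>X x \<longrightarrow> \<Inter>F \<noteq> {})
     \<and> (\<forall>A\<in>\<nu>X x. \<forall>B\<in>\<nu>X x. \<exists>C\<in>\<nu>X x. C \<subseteq> A \<inter> B)"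
      using fb unfolding filterbase_on_def .
    have "\<nu>X x \<noteq> {}" using conjunct1[OF fbc] .
    then obtain N0 where N0: "N0 \<in> \<nu>X x" by blast
    have F2': "\<forall>A\<in>\<nu>X x. \<forall>B\<in>\<nu>X x. \<exists>C\<in>\<nu>X x. C \<subseteq> A \<inter> B"
      using conjunct2[OF conjunct2[OF conjunct2[OF fbc]]] .
    have F2: "\<And>A B. A \<in> \<nu>X x \<Longrightarrow> B \<in> \<nu>X x \<Longrightarrow> \<exists>D\<in>\<nu>X x. D \<subseteq> A \<inter> B"
      using F2' by blast
    have "equiv C R"
    proof (rule equivI)
      show "R \<subseteq> C \<times> C" using Rdef by auto
      show "refl_on C R"
      proof (rule refl_onI)
        fix f assume "f \<in> C" then show "(f, f) \<in> R" using Rdef N0 sub by blast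
      qed
      show "sym R"
      proof (rule symI)
        fix f g assume a: "(f, g) \<in> R"
        then obtain N where N: "N \<in> \<nu>X x" "N \<subseteq> {z\<in>X. f z = g z}" "f \<in> C" "g \<in> C"
          unfolding Rdef by blast
        have "N \<subseteq> {z\<in>X. g z = f z}"
        proof (rule subsetI)
          fix z assume "z \<in> N"
          then have zz: "z \<in> X \<and> f z = g z" using N(2) by blast
          show "z \<in> {z\<in>X. g z = f z}" by (simp add: zz)
        qed
        then show "(g, f) \<in> R" unfolding Rdef using N by blast
      qed
      show "trans R"
      proof (rule transI)
        fix f g h assume a: "(f, g) \<in> R" "(g, h) \<in> R"
        then obtain N1 N2 where N: "N1 \<in> \<nu>X x" "N1 \<subseteq> {z\<in>X. f z = g z}"
          "N2 \<in> \<nu>X x" "N2 \<subseteq> {z\<in>X. g z = h z}" "f \<in> C" "h \<in> C" unfolding Rdef by blast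
        then obtain D where D: "D \<in> \<nu>X x" "D \<subseteq> N1 \<inter> N2" using F2 by blast
        have "D \<subseteq> {z\<in>X. f z = h z}"
        proof (rule subsetI)
          fix z assume "z \<in> D"
          then have z1: "z \<in> X \<and> f z = g z" and z2: "g z = h z" using N(2,4) D(2) by blast+
          show "z \<in> {z\<in>X. f z = h z}" using z1 z2 by simp
        qed
        then show "(f, h) \<in> R" unfolding Rdef using N D by blast
      qed
    qed
    moreover have "R \<noteq> C \<times> C"
    proof
      assume eq: "R = C \<times> C"
      have "ind X y1 y2 X \<in> C" "ind X y2 y1 X \<in> C"
        using ind_in_C[OF cX cY _ _ xX N0] y sub[OF N0] unfolding C_def by auto
      then have "(ind X y1 y2 X, ind X y2 y1 X) \<in> R" using eq by auto
      then obtain N where "N \<in> \<nu>X x" "N \<subseteq> {z\<in>X. ind X y1 y2 X z = ind X y2 y1 X z}"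
        unfolding Rdef by blast
      moreover have "{z\<in>X. ind X y1 y2 X z = ind X y2 y1 X z} = {}"
        using y(3) by (auto simp: ind_def)
      ultimately show False using sub by blast
    qed
    ultimately show "nontrivial_equiv C R" unfolding nontrivial_equiv_def by blast
  next
    assume ne: "nontrivial_equiv C R"
    then have eqv: "equiv C R" and nt: "R \<noteq> C \<times> C" unfolding nontrivial_equiv_def by auto
    have symR: "\<And>f g. (f, g) \<in> R \<Longrightarrow> (g, f) \<in> R" using eqv unfolding equiv_def sym_def by blast
    have transR: "\<And>f g h. (f, g) \<in> R \<Longrightarrow> (g, h) \<in> R \<Longrightarrow> (f, h) \<in> R"
      using eqv unfolding equiv_def trans_def by blast
    have reflR: "\<And>f. f \<in> C \<Longrightarrow> (f, f) \<in> R" using eqv unfolding equiv_def refl_on_def by blast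
    have nonempty: "\<nu>X x \<noteq> {}"
    proof
      assume e: "\<nu>X x = {}"
      then have "R = {}" using Rdef by auto
      then have "C = {}" using reflR by blast
      then show False using nt \<open>R = {}\<close> by simp
    qed
    have rel: "\<And>A B. A \<in> \<nu>X x \<Longrightarrow> B \<in> \<nu>X x \<Longrightarrow>
        \<exists>N\<in>\<nu>X x. N \<subseteq> {z\<in>X. z \<in> A \<longleftrightarrow> z \<in> B}"
    proof -
      fix A B assume A: "A \<in> \<nu>X x" and B: "B \<in> \<nu>X x"
      have "A \<subseteq> X" using sub A by blast
      have fA: "ind X y1 y2 A \<in> C" using ind_in_C[OF cX cY y(1,2) xX A] unfolding C_def by auto
      have fB: "ind X y1 y2 B \<in> C" using ind_in_C[OF cX cY y(1,2) xX B] unfolding C_def by auto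
      have k: "ind X y1 y2 X \<in> C" using ind_in_C[OF cX cY y(1,2) xX A] sub A unfolding C_def by auto
      have "(ind X y1 y2 A, ind X y1 y2 X) \<in> R"
        using sub[OF A] by (intro agreeI[OF fA k A]) auto
      moreover have "(ind X y1 y2 X, ind X y1 y2 B) \<in> R"
        using sub[OF B] by (intro agreeI[OF k fB B]) auto
      ultimately have "(ind X y1 y2 A, ind X y1 y2 B) \<in> R" by (rule transR)
      then obtain N where "N \<in> \<nu>X x" "\<forall>z\<in>N. (z \<in> A \<longleftrightarrow> z \<in> B)" using agreeD by blast
      moreover have "N \<subseteq> X" using sub[OF \<open>N \<in> \<nu>X x\<close>] by simp
      ultimately show "\<exists>N\<in>\<nu>X x. N \<subseteq> {z\<in>X. z \<in> A \<longleftrightarrow> z \<in> B}" by auto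
    qed
    have F2: "\<And>A B. A \<in> \<nu>X x \<Longrightarrow> B \<in> \<nu>X x \<Longrightarrow> \<exists>D\<in>\<nu>X x. D \<subseteq> A \<inter> B"
    proof -
      fix A B assume A: "A \<in> \<nu>X x" and B: "B \<in> \<nu>X x"
      obtain N1 where N1: "N1 \<in> \<nu>X x" "N1 \<subseteq> {z\<in>X. z \<in> A \<longleftrightarrow> z \<in> B}" using rel[OF A B] by blast
      define E where "E = {z\<in>X. z \<in> A \<longleftrightarrow> z \<in> B}"
      have p: "ind X y1 y2 E \<in> C" using ind_in_C[OF cX cY y(1,2) xX N1(1)] N1(2) unfolding C_def E_def by auto
      have q: "ind X y1 y2 (A \<union> B) \<in> C" using ind_in_C[OF cX cY y(1,2) xX A] unfolding C_def by auto
      have k: "ind X y1 y2 X \<in> C" using ind_in_C[OF cX cY y(1,2) xX A] sub A unfolding C_def by auto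
      have "(ind X y1 y2 E, ind X y1 y2 X) \<in> R"
        using N1 sub[OF N1(1)] unfolding E_def[symmetric] by (intro agreeI[OF p k N1(1)]) auto
      moreover have "(ind X y1 y2 X, ind X y1 y2 (A \<union> B)) \<in> R"
        using sub[OF A] by (intro agreeI[OF k q A]) auto
      ultimately have "(ind X y1 y2 E, ind X y1 y2 (A \<union> B)) \<in> R" by (rule transR)
      then obtain D where D: "D \<in> \<nu>X x" "\<forall>z\<in>D. (z \<in> E \<longleftrightarrow> z \<in> A \<union> B)" using agreeD by blast
      have "D \<subseteq> X" using sub[OF D(1)] by simp
      then have "D \<subseteq> A \<inter> B" using D(2) unfolding E_def by blast
      then show "\<exists>D\<in>\<nu>X x. D \<subseteq> A \<inter> B" using D(1) by blast
    qed
    have F0: "\<And>F. finite F \<and> F \<noteq> {} \<and> F \<subseteq> \<nu>X x \<longrightarrow> \<Inter>F \<noteq> {}"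
    proof
      fix F assume "finite F \<and> F \<noteq> {} \<and> F \<subseteq> \<nu>X x"
      then have "x \<in> \<Inter>F" using sub by auto
      then show "\<Inter>F \<noteq> {}" by auto
    qed
    show "filterbase_on X (\<nu>X x)"
      unfolding filterbase_on_def
    proof (intro conjI)
      show "\<nu>X x \<noteq> {}" by (rule nonempty)
      show "\<forall>A\<in>\<nu>X x. A \<subseteq> X" using sub by blast
      show "\<forall>F. finite F \<and> F \<noteq> {} \<and> F \<subseteq> \<nu>X x \<longrightarrow> \<Inter>F \<noteq> {}" using F0 by blast
      show "\<forall>A\<in>\<nu>X x. \<forall>B\<in>\<nu>X x. \<exists>C\<in>\<nu>X x. C \<subseteq> A \<inter> B" using F2 by blast
    qed
  qed
  then show ?thesis unfolding C_def R_def .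
qed

end
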